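(* Consider the repeated service game described in the context, with $t>0$, $c>0$, and a strictly decreasing continuous utility $\Gamma:[0,1]\to(0,\infty)$. Let $d^{\max}\in(0,1)$ and $w^{\min}\in(0,1)$ with $w^{\min}\Gamma(0)>c$. Let $d^\star$ be the unique $x\in(0,1)$ with $(1-x)\Gamma(x)=c/w^{\min}$. Define $$p^\star=\frac{c\left(\frac{c}{w^{\min}}-\Gamma(d^{\max})(1-d^{\max})\right)}{\left(\Gamma(d^\star)-\Gamma(d^{\max})\right)(1-d^\star)(1-d^{\max})-c\,(d^\star-d^{\max})},$$ $$\tau^\star=\frac{\Gamma(d^{\max})-p^\star}{\Gamma(d^{\max})-c/(1-d^{\max})}\,t,$$ assuming the denominators are nonzero and $0<\tau^\star<t$. Let $$w^\star=\frac{c}{(1-d^{\max})\Gamma(d^{\max})}.$$ Then: (i) with $(\tau,p)=(\tau^\star,p^\star)$, the cooperation conditions hold for every $d\in(0,d^{\max}]$ and every $w\in[w^\star,1)$; (ii) with $(\tau,p)=(\tau^\star,p^\star)$, the cooperation conditions hold for every $w\in[w^{\min},1)$ and every $d\in(0,d^\star]$; (iii) these thresholds are optimal. For every $\tau\in(0,t)$, every $p>0$ and every $w\in(0,1)$ with $w<w^\star$, the cooperation conditions fail at $d=d^{\max}$. Likewise, for every $\tau\in(0,t)$, every $p>0$ and every $d\in(d^\star,1)$, the cooperation conditions fail at $w=w^{\min}$.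
   Context: A service provider (SP) and a client interact in rounds of duration $t>0$. The parameters are: trial time $\tau\in(0,t)$, SP cost per unit time $c>0$, price per unit time $p>0$, channel outage probability $d\in(0,1)$, continuation probability (cooperation willingness) $w\in(0,1)$, and a client utility function $\Gamma$. When both players use COOP, the long-term payoffs are $$\Pi_s^{\mathrm C}=\frac{(1-d)(p-c)t-dc\tau}{1-(1-d)w},\qquad \Pi_c^{\mathrm C}=\frac{(1-d)(\Gamma(d)-p)t+d\Gamma(d)\tau}{1-(1-d)w}.$$ For an integer $j\ge 2$, the long-term payoff of a player using the defect-and-recover-after-$j$-rounds strategy JDEF$_j$ against COOP is: - for the SP, $$\Pi_s^{(j)}=\frac{(1-d)\big(pt-c\tau-w^{j-1}c(t-\tau)\big)-dc\tau}{1-(1-d)w^{j}};$$ - for the client, $$\Pi_c^{(j)}=\frac{(1-d)\big(\Gamma(d)\tau+w^{j-1}(\Gamma(d)(t-\tau)-pt)\big)+d\Gamma(d)\tau}{1-(1-d)w^{j}}.$$ The cooperation conditions (at given $d,w,\tau,p$) hold when both of the following hold: - $\Pi_s^{\mathrm C}\ge\Pi_s^{(j)}$ for all integers $j\ge2$; - $\Pi_c^{\mathrm C}\ge \Pi_c^{(j)}$ for all integers $j\ge 2$. *)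

theory Defs
  imports Complex_Main
begin

definition Pi_s_C :: "real \<Rightarrow> real \<Rightarrow> real \<Rightarrow> real \<Rightarrow> real \<Rightarrow> real \<Rightarrow> real" where
  "Pi_s_C t c tau p d w = ((1-d)*(p-c)*t - d*c*tau) / (1 - (1-d)*w)"

definition Pi_c_C :: "(real \<Rightarrow> real) \<Rightarrow> real \<Rightarrow> real \<Rightarrow> real \<Rightarrow> real \<Rightarrow> real \<Rightarrow> real" where
  "Pi_c_C \<Gamma> t tau p d w = ((1-d)*(\<Gamma> d - p)*t + d*\<Gamma> d*tau) / (1 - (1-d)*w)"

definition Pi_s_J :: "real \<Rightarrow> real \<Rightarrow> real \<Rightarrow> real \<Rightarrow> real \<Rightarrow> real \<Rightarrow> nat \<Rightarrow> real" where
  "Pi_s_J t c tau p d w j =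
     ((1-d)*(p*t - c*tau - w^(j-1)*c*(t-tau)) - d*c*tau) / (1 - (1-d)*w^j)"

definition Pi_c_J :: "(real \<Rightarrow> real) \<Rightarrow> real \<Rightarrow> real \<Rightarrow> real \<Rightarrow> real \<Rightarrow> real \<Rightarrow> nat \<Rightarrow> real" where
  "Pi_c_J \<Gamma> t tau p d w j =
     ((1-d)*(\<Gamma> d*tau + w^(j-1)*(\<Gamma> d*(t-tau) - p*t)) + d*\<Gamma> d*tau) / (1 - (1-d)*w^j)"

definition coop_conditions ::
  "(real \<Rightarrow> real) \<Rightarrow> real \<Rightarrow> real \<Rightarrow> real \<Rightarrow> real \<Rightarrow> real \<Rightarrow> real \<Rightarrow> bool" where
  "coop_conditions \<Gamma> t c tau p d w \<longleftrightarrow>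
     (\<forall>j::nat. j \<ge> 2 \<longrightarrow> Pi_s_C t c tau p d w \<ge> Pi_s_J t c tau p d w j) \<and>
     (\<forall>j::nat. j \<ge> 2 \<longrightarrow> Pi_c_C \<Gamma> t tau p d w \<ge> Pi_c_J \<Gamma> t tau p d w j)"

end

theory Submission
  imports Defs
begin


lemma s_diff:
  fixes a w u A B :: real
  assumes "a*w < 1" "a*w*u < 1"
  shows "(A - B)/(1 - a*w) - (A - B*u)/(1 - a*w*u) = (1-u)*(a*w*A - B)/((1-a*w)*(1-a*w*u))"
  using assms by (simp add: field_simps)

lemma c_diff:
  fixes a w u C E :: real
  assumes "a*w < 1" "a*w*u < 1"
  shows "(C + E)/(1 - a*w) - (C + E*u)/(1 - a*w*u) = (1-u)*(a*w*C + E)/((1-a*w)*(1-a*w*u))"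
  using assms by (simp add: field_simps)

lemma PsC_eq: "Pi_s_C t c tau p d w = (((1-d)*(p*t - c*tau) - d*c*tau) - (1-d)*c*(t-tau))/(1-(1-d)*w)"
  unfolding Pi_s_C_def by (simp add: algebra_simps)
lemma PsJ_eq: "j \<ge> 1 \<Longrightarrow> Pi_s_J t c tau p d w j = (((1-d)*(p*t - c*tau) - d*c*tau) - (1-d)*c*(t-tau)*w^(j-1))/(1-(1-d)*w*w^(j-1))"
  unfolding Pi_s_J_def by (cases j) (simp_all add: algebra_simps)
lemma PcC_eq: "Pi_c_C G t tau p d w = (G d * tau + (1-d)*(G d*(t-tau) - p*t))/(1-(1-d)*w)"
  unfolding Pi_c_C_def by (simp add: algebra_simps)
lemma PcJ_eq: "j \<ge> 1 \<Longrightarrow> Pi_c_J G t tau p d w j = (G d * tau + (1-d)*(G d*(t-tau) - p*t)*w^(j-1))/(1-(1-d)*w*w^(j-1))"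
  unfolding Pi_c_J_def by (cases j) (simp_all add: algebra_simps)

lemma coop_suff:
  assumes d: "0 < d" "d < 1" and w: "0 < w" "w < 1"
    and S: "c*(t - tau + w*tau) \<le> w*(1-d)*p*t"
    and Cl: "p*t \<le> G d*(t - tau + w*tau)"
  shows "coop_conditions G t c tau p d w"
  unfolding coop_conditions_def
proof (intro conjI allI impI)
  fix j :: nat assume j: "2 \<le> j"
  have j1: "1 \<le> j" using j by simp
  define u where "u = w^(j-1)"
  have u0: "0 \<le> u" "u \<le> 1" using w unfolding u_def by (auto simp: power_le_one)
  have aw: "(1-d)*w < 1" using d w by (smt (verit) mult_le_cancel_right1 mult_pos_pos)
  have awu: "(1-d)*w*u < 1" using aw u0 d w
    by (smt (verit) mult_left_le mult_nonneg_nonneg)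
  have den: "0 < (1-(1-d)*w)*(1-(1-d)*w*u)" using aw awu by simp
  have k1: "0 \<le> (1-d)*w*((1-d)*(p*t - c*tau) - d*c*tau) - (1-d)*c*(t-tau)"
  proof -
    have "(1-d)*w*((1-d)*(p*t - c*tau) - d*c*tau) - (1-d)*c*(t-tau) = (1-d)*(w*(1-d)*p*t - c*(t - tau + w*tau))"
      by (simp add: algebra_simps)
    thus ?thesis using S d by simp
  qed
  have "Pi_s_C t c tau p d w - Pi_s_J t c tau p d w j = (1-u)*((1-d)*w*((1-d)*(p*t - c*tau) - d*c*tau) - (1-d)*c*(t-tau))/((1-(1-d)*w)*(1-(1-d)*w*u))"
    unfolding PsC_eq PsJ_eq[OF j1] u_def[symmetric]
    by (rule s_diff) (use aw awu in auto)
  also have "\<dots> \<ge> 0" using den k1 u0 by simp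
  finally show "Pi_s_C t c tau p d w \<ge> Pi_s_J t c tau p d w j" by simp
next
  fix j :: nat assume j: "2 \<le> j"
  have j1: "1 \<le> j" using j by simp
  define u where "u = w^(j-1)"
  have u0: "0 \<le> u" "u \<le> 1" using w unfolding u_def by (auto simp: power_le_one)
  have aw: "(1-d)*w < 1" using d w by (smt (verit) mult_le_cancel_right1 mult_pos_pos)
  have awu: "(1-d)*w*u < 1" using aw u0 d w
    by (smt (verit) mult_left_le mult_nonneg_nonneg)
  have den: "0 < (1-(1-d)*w)*(1-(1-d)*w*u)" using aw awu by simp
  have k1: "0 \<le> (1-d)*w*(G d * tau) + (1-d)*(G d*(t-tau) - p*t)"
  proof -
    have "(1-d)*w*(G d * tau) + (1-d)*(G d*(t-tau) - p*t) = (1-d)*(G d*(t - tau + w*tau) - p*t)"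
      by (simp add: algebra_simps)
    thus ?thesis using Cl d by simp
  qed
  have "Pi_c_C G t tau p d w - Pi_c_J G t tau p d w j = (1-u)*((1-d)*w*(G d * tau) + (1-d)*(G d*(t-tau) - p*t))/((1-(1-d)*w)*(1-(1-d)*w*u))"
    unfolding PcC_eq PcJ_eq[OF j1] u_def[symmetric]
    by (rule c_diff) (use aw awu in auto)
  also have "\<dots> \<ge> 0" using den k1 u0 by simp
  finally show "Pi_c_C G t tau p d w \<ge> Pi_c_J G t tau p d w j" by simp
qed

lemma coop_nec:
  assumes d: "0 < d" "d < 1" and w: "0 < w" "w < 1"
    and co: "coop_conditions G t c tau p d w"
  shows "c*(t - tau + w*tau) \<le> w*(1-d)*p*t" "p*t \<le> G d*(t - tau + w*tau)"
proof -
  have aw: "(1-d)*w < 1" using d w by (smt (verit) mult_le_cancel_right1 mult_pos_pos)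
  have awu: "(1-d)*w*w < 1" using aw d w
    by (smt (verit) mult_left_le mult_nonneg_nonneg)
  have den: "0 < (1-(1-d)*w)*(1-(1-d)*w*w)" using aw awu by simp
  have c1: "Pi_s_C t c tau p d w \<ge> Pi_s_J t c tau p d w 2"
   and c2: "Pi_c_C G t tau p d w \<ge> Pi_c_J G t tau p d w 2" using co unfolding coop_conditions_def by auto
  have "Pi_s_C t c tau p d w - Pi_s_J t c tau p d w 2 = (1-w)*((1-d)*w*((1-d)*(p*t - c*tau) - d*c*tau) - (1-d)*c*(t-tau))/((1-(1-d)*w)*(1-(1-d)*w*w))"
    unfolding PsC_eq PsJ_eq[of 2, simplified]
    using s_diff[OF aw awu] by simp
  hence "0 \<le> (1-w)*((1-d)*w*((1-d)*(p*t - c*tau) - d*c*tau) - (1-d)*c*(t-tau))/((1-(1-d)*w)*(1-(1-d)*w*w))"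
    using c1 by simp
  hence "0 \<le> (1-w)*((1-d)*w*((1-d)*(p*t - c*tau) - d*c*tau) - (1-d)*c*(t-tau))"
    using den by (simp add: zero_le_divide_iff)
  hence "0 \<le> ((1-d)*w*((1-d)*(p*t - c*tau) - d*c*tau) - (1-d)*c*(t-tau))"
    using w by (simp add: zero_le_mult_iff)
  also have "((1-d)*w*((1-d)*(p*t - c*tau) - d*c*tau) - (1-d)*c*(t-tau)) = (1-d)*(w*(1-d)*p*t - c*(t - tau + w*tau))"
    by (simp add: algebra_simps)
  finally show "c*(t - tau + w*tau) \<le> w*(1-d)*p*t" using d by (simp add: zero_le_mult_iff)
  have "Pi_c_C G t tau p d w - Pi_c_J G t tau p d w 2 = (1-w)*((1-d)*w*(G d * tau) + (1-d)*(G d*(t-tau) - p*t))/((1-(1-d)*w)*(1-(1-d)*w*w))"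
    unfolding PcC_eq PcJ_eq[of 2, simplified]
    using c_diff[OF aw awu] by simp
  hence "0 \<le> (1-w)*((1-d)*w*(G d * tau) + (1-d)*(G d*(t-tau) - p*t))/((1-(1-d)*w)*(1-(1-d)*w*w))"
    using c2 by simp
  hence "0 \<le> (1-w)*((1-d)*w*(G d * tau) + (1-d)*(G d*(t-tau) - p*t))"
    using den by (simp add: zero_le_divide_iff)
  hence "0 \<le> (1-d)*w*(G d * tau) + (1-d)*(G d*(t-tau) - p*t)"
    using w by (simp add: zero_le_mult_iff)
  also have "(1-d)*w*(G d * tau) + (1-d)*(G d*(t-tau) - p*t) = (1-d)*(G d*(t - tau + w*tau) - p*t)"
    by (simp add: algebra_simps)
  finally show "p*t \<le> G d*(t - tau + w*tau)" using d by (simp add: zero_le_mult_iff)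
qed



theorem theorem2:
  fixes \<Gamma> :: "real \<Rightarrow> real" and t c dmax wmin dstar :: real
  assumes t_pos: "t > 0" and c_pos: "c > 0"
    and G_cont: "continuous_on {0..1} \<Gamma>"
    and G_dec: "\<forall>x\<in>{0..1}. \<forall>y\<in>{0..1}. x < y \<longrightarrow> \<Gamma> y < \<Gamma> x"
    and G_pos: "\<forall>x\<in>{0..1}. \<Gamma> x > 0"
    and dmax: "0 < dmax" "dmax < 1"
    and wmin: "0 < wmin" "wmin < 1"
    and wmin_G0: "wmin * \<Gamma> 0 > c"
    and dstar: "0 < dstar" "dstar < 1" "(1 - dstar) * \<Gamma> dstar = c / wmin"
    and dstar_unique: "\<forall>x. 0 < x \<and> x < 1 \<and> (1 - x) * \<Gamma> x = c / wmin \<longrightarrow> x = dstar"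
    and den_p: "(\<Gamma> dstar - \<Gamma> dmax) * (1 - dstar) * (1 - dmax) - c * (dstar - dmax) \<noteq> 0"
    and den_tau: "\<Gamma> dmax - c / (1 - dmax) \<noteq> 0"
    and tau_range:
      "let pstar = c * (c / wmin - \<Gamma> dmax * (1 - dmax)) /
                   ((\<Gamma> dstar - \<Gamma> dmax) * (1 - dstar) * (1 - dmax) - c * (dstar - dmax));
           taustar = (\<Gamma> dmax - pstar) / (\<Gamma> dmax - c / (1 - dmax)) * t
       in 0 < taustar \<and> taustar < t"
  shows
    "let pstar = c * (c / wmin - \<Gamma> dmax * (1 - dmax)) /
                 ((\<Gamma> dstar - \<Gamma> dmax) * (1 - dstar) * (1 - dmax) - c * (dstar - dmax));
         taustar = (\<Gamma> dmax - pstar) / (\<Gamma> dmax - c / (1 - dmax)) * t;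
         wstar = c / ((1 - dmax) * \<Gamma> dmax)
     in (\<forall>d w. 0 < d \<and> d \<le> dmax \<and> wstar \<le> w \<and> w < 1 \<longrightarrow>
            coop_conditions \<Gamma> t c taustar pstar d w)
      \<and> (\<forall>d w. wmin \<le> w \<and> w < 1 \<and> 0 < d \<and> d \<le> dstar \<longrightarrow>
            coop_conditions \<Gamma> t c taustar pstar d w)
      \<and> (\<forall>tau p w. 0 < tau \<and> tau < t \<and> 0 < p \<and> 0 < w \<and> w < 1 \<and> w < wstar \<longrightarrow>
            \<not> coop_conditions \<Gamma> t c tau p dmax w)
      \<and> (\<forall>tau p d. 0 < tau \<and> tau < t \<and> 0 < p \<and> dstar < d \<and> d < 1 \<longrightarrow>
            \<not> coop_conditions \<Gamma> t c tau p d wmin)"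
  proof -
  define g1 where "g1 = \<Gamma> dmax"
  define g2 where "g2 = \<Gamma> dstar"
  define P where "P = c * (c / wmin - \<Gamma> dmax * (1 - dmax)) /
                 ((\<Gamma> dstar - \<Gamma> dmax) * (1 - dstar) * (1 - dmax) - c * (dstar - dmax))"
  define T where "T = (\<Gamma> dmax - P) / (\<Gamma> dmax - c / (1 - dmax)) * t"
  define W where "W = c / ((1 - dmax) * \<Gamma> dmax)"
  have T: "0 < T" "T < t" using tau_range by (simp_all add: Let_def P_def T_def)
  have g1p: "g1 > 0" using G_pos dmax unfolding g1_def by auto
  have g2p: "g2 > 0" using G_pos dstar unfolding g2_def by auto
  have Wc: "W*(1-dmax)*g1 = c" unfolding W_def g1_def using g1p dmax unfolding g1_def by (simp add: field_simps)
  have wc: "wmin*(1-dstar)*g2 = c" using dstar(3) wmin unfolding g2_def by (simp add: field_simps)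
  have nz: "g1*(1-dmax) - c \<noteq> 0" using den_tau dmax unfolding g1_def by (simp add: field_simps)
  have T': "T = (g1 - P)*(1-dmax) / (g1*(1-dmax) - c) * t" unfolding T_def g1_def using dmax
    by (simp add: field_simps)
  have e: "T*(g1*(1-dmax) - c) = (g1-P)*(1-dmax)*t" using nz unfolding T' by (simp add: field_simps)
  have F1: "P*t = g1*(t - T + W*T)"
  proof -
    have "(1-dmax)*(g1*(t - T + W*T)) = (1-dmax)*g1*t - T*(g1*(1-dmax) - c)"
      unfolding W_def using g1p dmax g1_def by (simp add: field_simps)
    also have "\<dots> = (1-dmax)*(P*t)" unfolding e by (simp add: algebra_simps)
    finally show ?thesis using dmax by simp
  qed
  have F2: "P*t = g2*(t - T + wmin*T)"
  proof -
    have wm: "wmin = c/((1-dstar)*g2)" using wc dstar g2p by (simp add: field_simps)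
    have dn: "(g2 - g1) * (1 - dstar) * (1 - dmax) - c * (dstar - dmax) \<noteq> 0" using den_p unfolding g1_def g2_def .
    have P': "P = c * ((1-dstar)*g2 - g1 * (1 - dmax)) / ((g2 - g1) * (1 - dstar) * (1 - dmax) - c * (dstar - dmax))"
    proof -
      have "c/wmin = (1-dstar)*g2" using wc wmin by (simp add: field_simps)
      thus ?thesis unfolding P_def g1_def[symmetric] g2_def[symmetric] by simp
    qed
    have h1: "P*((g2 - g1) * (1 - dstar) * (1 - dmax) - c * (dstar - dmax)) = c * ((1-dstar)*g2 - g1 * (1 - dmax))"
      using dn unfolding P' by simp
    have "(g1*(1-dmax) - c)*(1-dstar)*(g2*(t - T + wmin*T)) = (1-dstar)*g2*t*(g1*(1-dmax) - c) - (1-dstar)*g2*(T*(g1*(1-dmax) - c)) + (wmin*(1-dstar)*g2)*(T*(g1*(1-dmax) - c))"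
      by (simp add: algebra_simps)
    also have "\<dots> = (1-dstar)*g2*t*(g1*(1-dmax) - c) - (1-dstar)*g2*((g1-P)*(1-dmax)*t) + c*((g1-P)*(1-dmax)*t)"
      unfolding e wc by simp
    also have "\<dots> = (g1*(1-dmax) - c)*(1-dstar)*(P*t) - t*(c * ((1-dstar)*g2 - g1 * (1 - dmax)) - P*((g2 - g1) * (1 - dstar) * (1 - dmax) - c * (dstar - dmax)))"
      by (simp add: algebra_simps)
    also have "\<dots> = (g1*(1-dmax) - c)*(1-dstar)*(P*t)" unfolding h1 by simp
    finally show ?thesis using nz dstar by simp
  qed
  have Kpos: "t - T + w*T > 0" if "0 \<le> w" for w using T that by (smt (verit) mult_nonneg_nonneg)
  have Pp: "P > 0" using F2 Kpos[of wmin] g2p t_pos wmin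
    by (smt (verit) mult_pos_pos zero_less_mult_iff)
  show ?thesis unfolding Let_def P_def[symmetric] T_def[symmetric] W_def[symmetric]
  proof (intro conjI allI impI)
    fix d w :: real assume a: "0 < d \<and> d \<le> dmax \<and> W \<le> w \<and> w < 1"
    have d: "0 < d" "d < 1" "d \<le> dmax" and w: "W \<le> w" "w < 1" using a dmax by auto
    have W0: "0 < W" unfolding W_def using c_pos g1p dmax g1_def by simp
    have Gd: "g1 \<le> \<Gamma> d" unfolding g1_def using G_dec[rule_format, of d dmax] d dmax by (cases "d = dmax") auto
    show "coop_conditions \<Gamma> t c T P d w"
    proof (rule coop_suff)
      show "0 < d" "d < 1" using d by auto
      show "0 < w" "w < 1" using w W0 by auto
      have "P*t = g1*(t - T + W*T)" by (rule F1)
      also have "\<dots> \<le> \<Gamma> d*(t - T + w*T)"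
        using Gd Kpos[of W] W0 T w g1p by (intro mult_mono) (auto intro: mult_right_mono)
      finally show "P*t \<le> \<Gamma> d*(t - T + w*T)" .
      define f where "f x = x*(1-d)*P*t - c*(t - T + x*T)" for x
      have PtP: "0 < P*t" using Pp t_pos by simp
      have "W*(1-dmax)*(P*t) \<le> W*(1-d)*(P*t)" using d W0 PtP by (intro mult_right_mono mult_left_mono) auto
      moreover have "W*(1-dmax)*(P*t) = c*(t - T + W*T)"
      proof -
        have "W*(1-dmax)*(P*t) = (W*(1-dmax)*g1)*(t - T + W*T)" unfolding F1 by (simp add: algebra_simps)
        thus ?thesis unfolding Wc .
      qed
      ultimately have fW: "f W \<ge> 0" unfolding f_def by (simp add: algebra_simps)
      have "(1-dmax)*(P*t) \<le> (1-d)*(P*t)" using d PtP by (intro mult_right_mono) auto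
      moreover have "(1-dmax)*(P*t) = (1-dmax)*g1*(t - T + W*T)" unfolding F1 by simp
      moreover have "(1-dmax)*g1*(t - T + W*T) \<ge> (1-dmax)*g1*(W*t)"
      proof -
        have "0 \<le> (t-T)*(1-W)" using T w by simp
        hence "W*t \<le> t - T + W*T" by (simp add: algebra_simps)
        thus ?thesis using dmax g1p by (intro mult_left_mono) auto
      qed
      moreover have "(1-dmax)*g1*(W*t) = c*t"
      proof -
        have "(1-dmax)*g1*(W*t) = (W*(1-dmax)*g1)*t" by (simp add: algebra_simps)
        thus ?thesis unfolding Wc .
      qed
      ultimately have f1: "f 1 \<ge> 0" unfolding f_def by (simp add: algebra_simps)
      have "(1-W)*f w = (1-w)*f W + (w-W)*f 1" unfolding f_def by (simp add: algebra_simps)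
      also have "\<dots> \<ge> 0" using fW f1 w by simp
      finally have "f w \<ge> 0" using w by (simp add: zero_le_mult_iff)
      thus "c*(t - T + w*T) \<le> w*(1-d)*P*t" unfolding f_def by simp
    qed
  next
    fix d w :: real assume a: "wmin \<le> w \<and> w < 1 \<and> 0 < d \<and> d \<le> dstar"
    have d: "0 < d" "d < 1" "d \<le> dstar" and w: "wmin \<le> w" "w < 1" using a dstar by auto
    have W0: "0 < wmin" using wmin by simp
    have Gd: "g2 \<le> \<Gamma> d" unfolding g2_def using G_dec[rule_format, of d dstar] d dstar by (cases "d = dstar") auto
    show "coop_conditions \<Gamma> t c T P d w"
    proof (rule coop_suff)
      show "0 < d" "d < 1" using d by auto
      show "0 < w" "w < 1" using w W0 by auto
      have "P*t = g2*(t - T + wmin*T)" by (rule F2)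
      also have "\<dots> \<le> \<Gamma> d*(t - T + w*T)"
        using Gd Kpos[of wmin] W0 T w g2p by (intro mult_mono) (auto intro: mult_right_mono)
      finally show "P*t \<le> \<Gamma> d*(t - T + w*T)" .
      define f where "f x = x*(1-d)*P*t - c*(t - T + x*T)" for x
      have PtP: "0 < P*t" using Pp t_pos by simp
      have "wmin*(1-dstar)*(P*t) \<le> wmin*(1-d)*(P*t)" using d W0 PtP by (intro mult_right_mono mult_left_mono) auto
      moreover have "wmin*(1-dstar)*(P*t) = c*(t - T + wmin*T)"
      proof -
        have "wmin*(1-dstar)*(P*t) = (wmin*(1-dstar)*g2)*(t - T + wmin*T)" unfolding F2 by (simp add: algebra_simps)
        thus ?thesis unfolding wc .
      qed
      ultimately have fW: "f wmin \<ge> 0" unfolding f_def by (simp add: algebra_simps)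
      have "(1-dstar)*(P*t) \<le> (1-d)*(P*t)" using d PtP by (intro mult_right_mono) auto
      moreover have "(1-dstar)*(P*t) = (1-dstar)*g2*(t - T + wmin*T)" unfolding F2 by simp
      moreover have "(1-dstar)*g2*(t - T + wmin*T) \<ge> (1-dstar)*g2*(wmin*t)"
      proof -
        have "0 \<le> (t-T)*(1-wmin)" using T w by simp
        hence "wmin*t \<le> t - T + wmin*T" by (simp add: algebra_simps)
        thus ?thesis using dstar g2p by (intro mult_left_mono) auto
      qed
      moreover have "(1-dstar)*g2*(wmin*t) = c*t"
      proof -
        have "(1-dstar)*g2*(wmin*t) = (wmin*(1-dstar)*g2)*t" by (simp add: algebra_simps)
        thus ?thesis unfolding wc .
      qed
      ultimately have f1: "f 1 \<ge> 0" unfolding f_def by (simp add: algebra_simps)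
      have "(1-wmin)*f w = (1-w)*f wmin + (w-wmin)*f 1" unfolding f_def by (simp add: algebra_simps)
      also have "\<dots> \<ge> 0" using fW f1 w by simp
      finally have "f w \<ge> 0" using w by (simp add: zero_le_mult_iff)
      thus "c*(t - T + w*T) \<le> w*(1-d)*P*t" unfolding f_def by simp
    qed
  next
    fix tau p w :: real assume a: "0 < tau \<and> tau < t \<and> 0 < p \<and> 0 < w \<and> w < 1 \<and> w < W"
    have w: "0 < w" "w < 1" "w < W" and tau: "0 < tau" "tau < t" using a by auto
    show "\<not> coop_conditions \<Gamma> t c tau p dmax w"
    proof
      assume co: "coop_conditions \<Gamma> t c tau p dmax w"
      have K: "0 < t - tau + w*tau" using tau w mult_nonneg_nonneg[of w tau] by linarith
      have "c*(t - tau + w*tau) \<le> w*(1-dmax)*p*t" "p*t \<le> g1*(t - tau + w*tau)"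
        using coop_nec[OF dmax w(1,2) co] unfolding g1_def by auto
      hence "c*(t - tau + w*tau) \<le> (w*(1-dmax)*g1)*(t - tau + w*tau)"
      proof -
        assume h: "c*(t - tau + w*tau) \<le> w*(1-dmax)*p*t" "p*t \<le> g1*(t - tau + w*tau)"
        have "(w*(1-dmax))*(p*t) \<le> (w*(1-dmax))*(g1*(t - tau + w*tau))"
          using h(2) w dmax by (intro mult_left_mono) auto
        thus ?thesis using h(1) by (simp add: algebra_simps)
      qed
      hence "c \<le> w*(1-dmax)*g1" using K by simp
      moreover have "w*(1-dmax)*g1 < W*(1-dmax)*g1" using w dmax g1p by simp
      ultimately show False using Wc by simp
    qed
  next
    fix tau p d :: real assume a: "0 < tau \<and> tau < t \<and> 0 < p \<and> dstar < d \<and> d < 1"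
    have d: "dstar < d" "d < 1" "0 < d" and tau: "0 < tau" "tau < t" using a dstar by auto
    show "\<not> coop_conditions \<Gamma> t c tau p d wmin"
    proof
      assume co: "coop_conditions \<Gamma> t c tau p d wmin"
      have K: "0 < t - tau + wmin*tau" using tau wmin mult_nonneg_nonneg[of wmin tau] by linarith
      have "c*(t - tau + wmin*tau) \<le> wmin*(1-d)*p*t" "p*t \<le> \<Gamma> d*(t - tau + wmin*tau)"
        using coop_nec[OF d(3,2) wmin co] by auto
      hence "c*(t - tau + wmin*tau) \<le> (wmin*(1-d)*\<Gamma> d)*(t - tau + wmin*tau)"
      proof -
        assume h: "c*(t - tau + wmin*tau) \<le> wmin*(1-d)*p*t" "p*t \<le> \<Gamma> d*(t - tau + wmin*tau)"
        have "(wmin*(1-d))*(p*t) \<le> (wmin*(1-d))*(\<Gamma> d*(t - tau + wmin*tau))"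
          using h(2) wmin d by (intro mult_left_mono) auto
        thus ?thesis using h(1) by (simp add: algebra_simps)
      qed
      hence "c \<le> wmin*(1-d)*\<Gamma> d" using K by simp
      moreover have "(1-d)*\<Gamma> d < (1-dstar)*g2"
      proof -
        have "\<Gamma> d < g2" unfolding g2_def using G_dec[rule_format, of dstar d] d dstar by auto
        moreover have "0 < \<Gamma> d" using G_pos d by auto
        ultimately show ?thesis using d by (intro mult_strict_mono) auto
      qed
      hence "wmin*((1-d)*\<Gamma> d) < wmin*((1-dstar)*g2)" using wmin by simp
      ultimately show False using wc by (simp add: mult.assoc)
    qed
  qed
qed

end
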